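(* Let $A=(a_1\ a_2\ a_3)$ be a $1\times 3$ matrix of pairwise distinct positive integers, and let $M$ be a minimal Markov basis for $A$. Then $M$ is distance reducing if and only if $M$ reduces the distance of the circuits of $A$.
   Context: For $z\in\mathbb Z^n$, $z^+,z^-\in\mathbb N^n$ denote the unique vectors with disjoint supports and $z=z^+-z^-$; $\|\cdot\|$ is the $1$-norm. The toric ideal of $A$ is $I_A=\langle x^{u^+}-x^{u^-}: u\in\ker(A)\rangle$, $\ker(A)\subseteq\mathbb Z^n$. A Markov basis is a set $B\subseteq\ker(A)$ such that $\{x^{u^+}-x^{u^-}:u\in B\}$ generates $I_A$; it is minimal if no proper subset is a Markov basis. For nonzero $z\in\ker(A)$ and $u\in\ker(A)$, $u$ reduces the distance of $z$ if there exist $(p,q)\in\{(z^+,z^-),(z^-,z^+)\}$ and $\varepsilon\in\{1,-1\}$ with $p+\varepsilon u\in\mathbb N^n$ and $\|p+\varepsilon u-q\|<\|z\|$. A set $B$ reduces the distance of $Z\subseteq\ker(A)$ if every nonzero $z\in Z$ has its distance reduced by some $u\in B$; $B$ is distance reducing if it reduces the distance of $\ker(A)$. A circuit of $A$ is a nonzero element of $\ker(A)$ whose support has exactly two elements. *)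

theory Defs
  imports "HOL-Library.Poly_Mapping" "HOL-Library.Numeral_Type"
begin

type_synonym zvec = "3 \<Rightarrow> int"
type_synonym 'k poly3 = "(3 \<Rightarrow>\<^sub>0 nat) \<Rightarrow>\<^sub>0 'k"

definition pos_part :: "zvec \<Rightarrow> zvec" where
  "pos_part z = (\<lambda>i. max (z i) 0)"

definition neg_part :: "zvec \<Rightarrow> zvec" where
  "neg_part z = (\<lambda>i. max (- z i) 0)"

definition norm1 :: "zvec \<Rightarrow> int" where
  "norm1 z = (\<Sum>i\<in>UNIV. \<bar>z i\<bar>)"

definition monom3 :: "zvec \<Rightarrow> 'k::field poly3" where
  "monom3 v = Poly_Mapping.single (\<Sum>i\<in>UNIV. Poly_Mapping.single i (nat (v i))) 1"

definition binom3 :: "zvec \<Rightarrow> 'k::field poly3" where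
  "binom3 u = monom3 (pos_part u) - monom3 (neg_part u)"

definition ideal_gen :: "'a::comm_ring_1 set \<Rightarrow> 'a set" where
  "ideal_gen S = {(\<Sum>s\<in>F. r s * s) | F r. finite F \<and> F \<subseteq> S}"

definition kerA :: "zvec \<Rightarrow> zvec set" where
  "kerA a = {u. (\<Sum>i\<in>UNIV. a i * u i) = 0}"

definition toric_ideal :: "'k::field itself \<Rightarrow> zvec \<Rightarrow> 'k poly3 set" where
  "toric_ideal K a = ideal_gen ((binom3 :: zvec \<Rightarrow> 'k poly3) ` kerA a)"

definition markov_basis :: "'k::field itself \<Rightarrow> zvec \<Rightarrow> zvec set \<Rightarrow> bool" where
  "markov_basis K a B \<longleftrightarrow> B \<subseteq> kerA a \<and>
     ideal_gen ((binom3 :: zvec \<Rightarrow> 'k poly3) ` B) = toric_ideal K a"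

definition minimal_markov_basis :: "'k::field itself \<Rightarrow> zvec \<Rightarrow> zvec set \<Rightarrow> bool" where
  "minimal_markov_basis K a B \<longleftrightarrow> markov_basis K a B \<and>
     (\<forall>B'. B' \<subset> B \<longrightarrow> \<not> markov_basis K a B')"

definition reduces_distance :: "zvec \<Rightarrow> zvec \<Rightarrow> bool" where
  "reduces_distance u z \<longleftrightarrow>
     (\<exists>(p, q) \<in> {(pos_part z, neg_part z), (neg_part z, pos_part z)}.
      \<exists>\<epsilon> \<in> {1, -1::int}.
        (\<forall>i. 0 \<le> p i + \<epsilon> * u i) \<and>
        norm1 (\<lambda>i. p i + \<epsilon> * u i - q i) < norm1 z)"

definition reduces_distance_of :: "zvec set \<Rightarrow> zvec set \<Rightarrow> bool" where
  "reduces_distance_of B Z \<longleftrightarrow> (\<forall>z\<in>Z. z \<noteq> (\<lambda>_. 0) \<longrightarrow> (\<exists>u\<in>B. reduces_distance u z))"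

definition distance_reducing :: "zvec \<Rightarrow> zvec set \<Rightarrow> bool" where
  "distance_reducing a B \<longleftrightarrow> reduces_distance_of B (kerA a)"

definition circuits :: "zvec \<Rightarrow> zvec set" where
  "circuits a = {z \<in> kerA a. z \<noteq> (\<lambda>_. 0) \<and> card {i. z i \<noteq> 0} = 2}"

end

theory Submission
  imports Defs "HOL-Library.Function_Algebras"
begin


definition nonneg :: "zvec \<Rightarrow> bool" where "nonneg x \<longleftrightarrow> (\<forall>l. 0 \<le> x l)"

definition dot :: "zvec \<Rightarrow> zvec \<Rightarrow> int" where "dot a x = (\<Sum>i\<in>UNIV. a i * x i)"

definition stepr :: "zvec set \<Rightarrow> (zvec \<times> zvec) set" where
  "stepr S = {(x,y). nonneg x \<and> nonneg y \<and> (\<exists>u\<in>S. y = x + u \<or> y = x - u)}"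

abbreviation conn :: "zvec set \<Rightarrow> zvec \<Rightarrow> zvec \<Rightarrow> bool" where
  "conn S x y \<equiv> (x, y) \<in> (stepr S)\<^sup>*"

definition expo :: "zvec \<Rightarrow> (3 \<Rightarrow>\<^sub>0 nat)" where
  "expo v = (\<Sum>i\<in>UNIV. Poly_Mapping.single i (nat (v i)))"

lemma lookup_expo [simp]: "Poly_Mapping.lookup (expo v) i = nat (v i)"
proof -
  have "Poly_Mapping.lookup (expo v) i = (\<Sum>j\<in>UNIV. (nat (v j) when j = i))"
    unfolding expo_def by (simp only: lookup_sum lookup_single)
  also have "\<dots> = nat (v i)"
    by (simp add: when_def)
  finally show ?thesis .
qed

lemma expo_add: "nonneg x \<Longrightarrow> nonneg y \<Longrightarrow> expo (x + y) = expo x + expo y"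
  by (rule poly_mapping_eqI) (simp add: lookup_add nonneg_def nat_add_distrib)

lemma expo_inj: "nonneg x \<Longrightarrow> nonneg y \<Longrightarrow> expo x = expo y \<Longrightarrow> x = y"
proof
  fix l assume "nonneg x" "nonneg y" "expo x = expo y"
  then have "nat (x l) = nat (y l)" by (metis lookup_expo)
  then show "x l = y l" using \<open>nonneg x\<close> \<open>nonneg y\<close> unfolding nonneg_def
    by (metis nat_eq_iff2)
qed

lemma monom3_eq: "monom3 v = Poly_Mapping.single (expo v) 1"
  unfolding monom3_def expo_def by simp

lemma monom3_add: "nonneg x \<Longrightarrow> nonneg y \<Longrightarrow> (monom3 (x + y) :: 'k::field poly3) = monom3 x * monom3 y"
  by (simp add: monom3_eq expo_add mult_single)

lemma nonneg_pos [simp]: "nonneg (pos_part z)" by (simp add: nonneg_def pos_part_def)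
lemma nonneg_neg [simp]: "nonneg (neg_part z)" by (simp add: nonneg_def neg_part_def)
lemma pos_minus_neg: "pos_part z - neg_part z = z"
  by (rule ext) (simp add: pos_part_def neg_part_def)

lemma ig_zero: "0 \<in> ideal_gen S"
  unfolding ideal_gen_def by (rule CollectI, rule exI[of _ "{}"]) auto

lemma ig_gen: "s \<in> S \<Longrightarrow> s \<in> ideal_gen S"
  unfolding ideal_gen_def by (rule CollectI, rule exI[of _ "{s}"], rule exI[of _ "\<lambda>_. 1"]) auto

lemma ig_add: assumes "x \<in> ideal_gen S" "y \<in> ideal_gen S" shows "x + y \<in> ideal_gen S"
proof -
  obtain F r where F: "finite F" "F \<subseteq> S" "x = (\<Sum>s\<in>F. r s * s)" using assms(1) unfolding ideal_gen_def by blast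
  obtain G q where G: "finite G" "G \<subseteq> S" "y = (\<Sum>s\<in>G. q s * s)" using assms(2) unfolding ideal_gen_def by blast
  define t where "t s = (if s \<in> F then r s else 0) + (if s \<in> G then q s else 0)" for s
  have "x = (\<Sum>s\<in>F \<union> G. (if s \<in> F then r s else 0) * s)"
    unfolding F(3) by (rule sum.mono_neutral_cong_left) (use F G in auto)
  moreover have "y = (\<Sum>s\<in>F \<union> G. (if s \<in> G then q s else 0) * s)"
    unfolding G(3) by (rule sum.mono_neutral_cong_left) (use F G in auto)
  ultimately have "x + y = (\<Sum>s\<in>F \<union> G. t s * s)"
    by (simp add: t_def sum.distrib[symmetric] distrib_right)
  then show ?thesis unfolding ideal_gen_def mem_Collect_eq using F G
    by (intro exI[of _ "F \<union> G"] exI[of _ t]) simp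
qed

lemma ig_mult: assumes "x \<in> ideal_gen S" shows "c * x \<in> ideal_gen S"
proof -
  obtain F r where F: "finite F" "F \<subseteq> S" "x = (\<Sum>s\<in>F. r s * s)" using assms(1) unfolding ideal_gen_def by blast
  have "c * x = (\<Sum>s\<in>F. (c * r s) * s)" unfolding F(3) by (simp add: sum_distrib_left mult.assoc)
  then show ?thesis unfolding ideal_gen_def mem_Collect_eq using F
    by (intro exI[of _ F] exI[of _ "\<lambda>s. c * r s"]) simp
qed

lemma ig_diff: "x \<in> ideal_gen S \<Longrightarrow> y \<in> ideal_gen S \<Longrightarrow> x - y \<in> ideal_gen S"
  using ig_add[of x S "(-1) * y"] ig_mult[of y S "-1"] by simp

lemma ig_sum: "finite F \<Longrightarrow> (\<And>s. s \<in> F \<Longrightarrow> f s \<in> ideal_gen S) \<Longrightarrow> (\<Sum>s\<in>F. f s) \<in> ideal_gen S"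
  by (induction F rule: finite_induct) (auto intro: ig_zero ig_add)

lemma ig_sub: assumes "S \<subseteq> ideal_gen T" shows "ideal_gen S \<subseteq> ideal_gen T"
proof
  fix x assume "x \<in> ideal_gen S"
  then obtain F r where F: "finite F" "F \<subseteq> S" "x = (\<Sum>s\<in>F. r s * s)" unfolding ideal_gen_def by blast
  show "x \<in> ideal_gen T" unfolding F(3)
    by (rule ig_sum) (use F assms in \<open>auto intro: ig_mult\<close>)
qed

lemma ig_mono: "S \<subseteq> T \<Longrightarrow> ideal_gen S \<subseteq> ideal_gen T"
  by (rule ig_sub) (auto intro: ig_gen)



lemma stepr_sym: "(x, y) \<in> stepr S \<Longrightarrow> (y, x) \<in> stepr S"
  unfolding stepr_def by auto

lemma conn_sym: "conn S x y \<Longrightarrow> conn S y x"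
proof (induction rule: rtrancl_induct)
  case base then show ?case by simp
next
  case (step y z) then show ?case
    by (meson converse_rtrancl_into_rtrancl stepr_sym)
qed

lemma conn_mono: "S \<subseteq> T \<Longrightarrow> conn S x y \<Longrightarrow> conn T x y"
  by (rule rtrancl_mono[THEN subsetD]) (auto simp: stepr_def)

lemma conn_nonneg: "conn S x y \<Longrightarrow> nonneg x \<Longrightarrow> nonneg y"
  by (induction rule: rtrancl_induct) (auto simp: stepr_def)

lemma nonneg_add: "nonneg x \<Longrightarrow> nonneg y \<Longrightarrow> nonneg (x + y)"
  by (simp add: nonneg_def)

lemma conn_shift: "conn S x y \<Longrightarrow> nonneg e \<Longrightarrow> conn S (x + e) (y + e)"
proof (induction rule: rtrancl_induct)
  case base then show ?case by simp
next
  case (step y z)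
  have "(y + e, z + e) \<in> stepr S"
    using step(2) \<open>nonneg e\<close> unfolding stepr_def
    by (auto simp: nonneg_add algebra_simps)
  then show ?case using step by (meson rtrancl.rtrancl_into_rtrancl)
qed

lemma conn_step: "u \<in> S \<Longrightarrow> nonneg x \<Longrightarrow> nonneg (x + u) \<Longrightarrow> conn S x (x + u)"
  unfolding stepr_def by (rule r_into_rtrancl) auto

lemma conn_step': "u \<in> S \<Longrightarrow> nonneg x \<Longrightarrow> nonneg (x - u) \<Longrightarrow> conn S x (x - u)"
  unfolding stepr_def by (rule r_into_rtrancl) auto

lemma conn_trans: "conn S x y \<Longrightarrow> conn S y z \<Longrightarrow> conn S x z"
  by (rule rtrancl_trans)

lemma nn_neg: "nonneg (y + u) \<Longrightarrow> nonneg y \<Longrightarrow> neg_part u l \<le> y l"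
proof -
  assume a: "nonneg (y + u)" "nonneg y"
  have "0 \<le> (y + u) l" "0 \<le> y l" using a unfolding nonneg_def by blast+
  then show ?thesis unfolding neg_part_def by simp
qed

lemma nn_pos: "nonneg (y - u) \<Longrightarrow> nonneg y \<Longrightarrow> pos_part u l \<le> y l"
proof -
  assume a: "nonneg (y - u)" "nonneg y"
  have "0 \<le> (y - u) l" "0 \<le> y l" using a unfolding nonneg_def by blast+
  then show ?thesis unfolding pos_part_def by simp
qed

section \<open>Connectivity implies ideal membership\<close>

lemma step_ideal:
  assumes "(y, w) \<in> stepr S"
  shows "(monom3 y - monom3 w :: 'k::field poly3) \<in> ideal_gen (binom3 ` S)"
proof -
  from assms obtain u where u: "u \<in> S" "nonneg y" "nonneg w" "w = y + u \<or> w = y - u"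
    unfolding stepr_def by auto
  have g: "(binom3 u :: 'k poly3) \<in> ideal_gen (binom3 ` S)" using u(1) by (auto intro: ig_gen)
  show ?thesis
  proof (cases "w = y + u")
    case True
    define r where "r = y - neg_part u"
    have rn: "nonneg r" unfolding r_def nonneg_def using nn_neg[OF _ u(2), of l] u(3) True
      by (simp add: nn_neg u(2))
    have y: "y = r + neg_part u" unfolding r_def by simp
    have w: "w = r + pos_part u" unfolding True r_def
      by (rule ext) (simp add: pos_part_def neg_part_def max_def)
    have "(monom3 y - monom3 w :: 'k poly3) = (- monom3 r) * binom3 u"
      unfolding y w binom3_def using rn by (simp add: monom3_add algebra_simps)
    then show ?thesis using ig_mult[OF g, of "- monom3 r"] by simp
  next
    case False
    then have F: "w = y - u" using u(4) by simp
    define r where "r = y - pos_part u"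
    have rn: "nonneg r" unfolding r_def nonneg_def using u(3) F
      by (simp add: nn_pos u(2))
    have y: "y = r + pos_part u" unfolding r_def by simp
    have w: "w = r + neg_part u" unfolding F r_def
      by (rule ext) (simp add: pos_part_def neg_part_def max_def)
    have "(monom3 y - monom3 w :: 'k poly3) = monom3 r * binom3 u"
      unfolding y w binom3_def using rn by (simp add: monom3_add algebra_simps)
    then show ?thesis using g by (simp add: ig_mult)
  qed
qed

lemma conn_ideal:
  "conn S x y \<Longrightarrow> (monom3 x - monom3 y :: 'k::field poly3) \<in> ideal_gen (binom3 ` S)"
proof (induction rule: rtrancl_induct)
  case base then show ?case by (simp add: ig_zero)
next
  case (step y z)
  have "(monom3 x - monom3 z :: 'k poly3) = (monom3 x - monom3 y) + (monom3 y - monom3 z)" by simp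
  then show ?case using step step_ideal[OF step(2)] by (metis ig_add)
qed

section \<open>Ideal membership implies connectivity\<close>

definition phi :: "(3 \<Rightarrow>\<^sub>0 nat) set \<Rightarrow> 'k::field poly3 \<Rightarrow> 'k" where
  "phi E f = (\<Sum>n\<in>Poly_Mapping.keys f. Poly_Mapping.lookup f n * (if n \<in> E then 1 else 0))"

lemma phi_eq:
  assumes "finite T" "Poly_Mapping.keys f \<subseteq> T"
  shows "phi E f = (\<Sum>n\<in>T. Poly_Mapping.lookup f n * (if n \<in> E then 1 else 0))"
  unfolding phi_def
  by (rule sum.mono_neutral_left) (use assms in \<open>auto simp: in_keys_iff\<close>)

lemma phi_add: "phi E (f + g) = phi E f + phi E g"
proof -
  let ?T = "Poly_Mapping.keys f \<union> Poly_Mapping.keys g"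
  have "phi E (f + g) = (\<Sum>n\<in>?T. Poly_Mapping.lookup (f + g) n * (if n \<in> E then 1 else 0))"
    by (rule phi_eq) (auto dest: keys_add[THEN subsetD])
  also have "\<dots> = (\<Sum>n\<in>?T. Poly_Mapping.lookup f n * (if n \<in> E then 1 else 0))
      + (\<Sum>n\<in>?T. Poly_Mapping.lookup g n * (if n \<in> E then 1 else 0))"
    by (simp add: lookup_add distrib_right sum.distrib)
  also have "\<dots> = phi E f + phi E g"
    by (simp add: phi_eq[symmetric])
  finally show ?thesis .
qed

lemma phi_zero [simp]: "phi E 0 = 0" unfolding phi_def by simp

lemma phi_uminus: "phi E (- f) = - phi E f"
  using phi_add[of E f "-f"] by (metis add.commute eq_neg_iff_add_eq_0 add_uminus_conv_diff diff_self phi_zero)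

lemma phi_diff: "phi E (f - g) = phi E f - phi E g"
  using phi_add[of E f "-g"] phi_uminus[of E g] by simp

lemma phi_single: "phi E (Poly_Mapping.single n c) = c * (if n \<in> E then 1 else 0)"
  by (subst phi_eq[of "{n}"]) auto

lemma phi_sum: "finite X \<Longrightarrow> phi E (\<Sum>x\<in>X. f x) = (\<Sum>x\<in>X. phi E (f x))"
  by (induction X rule: finite_induct) (auto simp: phi_add)

lemma pm_repr: "f = (\<Sum>n\<in>Poly_Mapping.keys f. Poly_Mapping.single n (Poly_Mapping.lookup f n))"
proof (rule poly_mapping_eqI)
  fix k
  have "Poly_Mapping.lookup (\<Sum>n\<in>Poly_Mapping.keys f. Poly_Mapping.single n (Poly_Mapping.lookup f n)) k
     = (\<Sum>n\<in>Poly_Mapping.keys f. (if n = k then Poly_Mapping.lookup f n else 0))"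
    by (simp only: lookup_sum lookup_single when_def)
  also have "\<dots> = Poly_Mapping.lookup f k"
    by (simp add: sum.delta in_keys_iff)
  finally show "Poly_Mapping.lookup f k = Poly_Mapping.lookup (\<Sum>n\<in>Poly_Mapping.keys f. Poly_Mapping.single n (Poly_Mapping.lookup f n)) k"
    by simp
qed

lemma phi_mult_binom:
  assumes "\<And>n. n + expo (pos_part u) \<in> E \<longleftrightarrow> n + expo (neg_part u) \<in> E"
  shows "phi E (r * (binom3 u :: 'k::field poly3)) = 0"
proof -
  let ?A = "expo (pos_part u)" and ?B = "expo (neg_part u)"
  have "r * (binom3 u :: 'k poly3) = (\<Sum>n\<in>Poly_Mapping.keys r. Poly_Mapping.single n (Poly_Mapping.lookup r n))
        * (Poly_Mapping.single ?A 1 - Poly_Mapping.single ?B 1)"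
    unfolding binom3_def monom3_eq by (subst pm_repr[of r]) simp
  also have "\<dots> = (\<Sum>n\<in>Poly_Mapping.keys r. Poly_Mapping.single (n + ?A) (Poly_Mapping.lookup r n)
                 - Poly_Mapping.single (n + ?B) (Poly_Mapping.lookup r n))"
    by (simp add: sum_distrib_right right_diff_distrib mult_single sum_subtractf)
  finally have eq: "r * (binom3 u :: 'k poly3) = \<dots>" .
  show ?thesis unfolding eq
    by (simp add: phi_sum phi_diff phi_single assms)
qed

lemma markov_conn:
  assumes "(binom3 z :: 'k::field poly3) \<in> ideal_gen (binom3 ` M)"
  shows "conn M (pos_part z) (neg_part z)"
proof (rule ccontr)
  assume nc: "\<not> conn M (pos_part z) (neg_part z)"
  define C where "C = {y. conn M (pos_part z) y}"
  define E where "E = expo ` C"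
  have Cnn: "y \<in> C \<Longrightarrow> nonneg y" for y unfolding C_def using conn_nonneg by auto
  have memE: "nonneg y \<Longrightarrow> expo y \<in> E \<longleftrightarrow> y \<in> C" for y
    unfolding E_def using Cnn expo_inj by blast
  define bk :: "(3 \<Rightarrow>\<^sub>0 nat) \<Rightarrow> zvec" where "bk n = (\<lambda>i. int (Poly_Mapping.lookup n i))" for n
  have bnn: "nonneg (bk n)" for n unfolding bk_def nonneg_def by simp
  have ebk: "expo (bk n) = n" for n
    by (rule poly_mapping_eqI) (simp add: bk_def)
  have clos: "n + expo (pos_part u) \<in> E \<longleftrightarrow> n + expo (neg_part u) \<in> E" if u: "u \<in> M" for u n
  proof -
    let ?y1 = "bk n + pos_part u" and ?y2 = "bk n + neg_part u"
    have n1: "nonneg ?y1" "nonneg ?y2" using bnn by (auto intro: nonneg_add)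
    have e1: "expo ?y1 = n + expo (pos_part u)" "expo ?y2 = n + expo (neg_part u)"
      using bnn by (simp_all add: expo_add ebk)
    have e: "?y1 - u = ?y2" by (rule ext) (simp add: pos_part_def neg_part_def max_def)
    have "conn M ?y1 (?y1 - u)" by (rule conn_step'[OF u n1(1)]) (simp only: e n1(2))
    then have st: "conn M ?y1 ?y2" by (simp only: e)
    have "?y1 \<in> C \<longleftrightarrow> ?y2 \<in> C"
      unfolding C_def using st conn_sym conn_trans by blast
    then show ?thesis using memE[OF n1(1)] memE[OF n1(2)] e1 by simp
  qed
  from assms obtain F r where F: "finite F" "F \<subseteq> binom3 ` M"
      "(binom3 z :: 'k poly3) = (\<Sum>s\<in>F. r s * s)"
    unfolding ideal_gen_def by blast
  have "phi E (binom3 z :: 'k poly3) = (\<Sum>s\<in>F. phi E (r s * s))"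
    unfolding F(3) using F(1) by (simp add: phi_sum)
  also have "\<dots> = 0"
  proof (rule sum.neutral, rule ballI)
    fix s assume "s \<in> F"
    then obtain u where "u \<in> M" "s = binom3 u" using F(2) by auto
    then show "phi E (r s * s) = 0" using phi_mult_binom[of u E "r s"] clos by simp
  qed
  finally have 0: "phi E (binom3 z :: 'k poly3) = 0" .
  have "pos_part z \<in> C" unfolding C_def by simp
  then have p: "expo (pos_part z) \<in> E" unfolding E_def by simp
  have "neg_part z \<notin> C" unfolding C_def using nc by simp
  then have q: "expo (neg_part z) \<notin> E" using memE[of "neg_part z"] by simp
  have "phi E (binom3 z :: 'k poly3) = 1"
    unfolding binom3_def monom3_eq phi_diff phi_single using p q by simp
  with 0 show False by simp
qed

lemma dot_add: "dot a (x + y) = dot a x + dot a y"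
  unfolding dot_def by (simp add: distrib_left sum.distrib)
lemma dot_diff: "dot a (x - y) = dot a x - dot a y"
  unfolding dot_def by (simp add: right_diff_distrib sum_subtractf)
lemma dot_mono: "(\<And>l. 0 \<le> a l) \<Longrightarrow> (\<And>l. x l \<le> y l) \<Longrightarrow> dot a x \<le> dot a y"
  unfolding dot_def by (rule sum_mono) (simp add: mult_left_mono)
lemma kerA_dot: "u \<in> kerA a \<longleftrightarrow> dot a u = 0"
  unfolding kerA_def dot_def by simp
lemma dot_pos_neg: "u \<in> kerA a \<Longrightarrow> dot a (pos_part u) = dot a (neg_part u)"
  using dot_diff[of a "pos_part u" "neg_part u"] by (simp add: pos_minus_neg kerA_dot)

lemma conn_deg:
  assumes "M \<subseteq> kerA a" "\<And>l. 0 \<le> a l" "conn M x y"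
  shows "conn {u\<in>M. dot a (pos_part u) \<le> dot a x} x y"
proof -
  have "conn {u\<in>M. dot a (pos_part u) \<le> dot a x} x y \<and> dot a y = dot a x"
    using assms(3)
  proof (induction rule: rtrancl_induct)
    case base then show ?case by simp
  next
    case (step y w)
    from step(2) obtain u where u: "u \<in> M" "nonneg y" "nonneg w" "w = y + u \<or> w = y - u"
      unfolding stepr_def by auto
    have uk: "dot a u = 0" using u(1) assms(1) kerA_dot by blast
    have dw: "dot a w = dot a y" using u(4) uk by (auto simp: dot_add dot_diff)
    have deg: "dot a (pos_part u) \<le> dot a y"
    proof (cases "w = y + u")
      case True
      have "\<And>l. neg_part u l \<le> y l" using u(2,3) True nn_neg by auto
      then have "dot a (neg_part u) \<le> dot a y" by (rule dot_mono[OF assms(2)])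
      then show ?thesis using dot_pos_neg[of u a] u(1) assms(1) by auto
    next
      case False
      then have "w = y - u" using u(4) by simp
      then have "\<And>l. pos_part u l \<le> y l" using u(2,3) nn_pos by auto
      then show ?thesis by (rule dot_mono[OF assms(2)])
    qed
    have st: "(y, w) \<in> stepr {u\<in>M. dot a (pos_part u) \<le> dot a x}"
      using u deg step.IH unfolding stepr_def by auto
    from step.IH have c1: "conn {u\<in>M. dot a (pos_part u) \<le> dot a x} x y" and d1: "dot a y = dot a x"
      by auto
    have "conn {u\<in>M. dot a (pos_part u) \<le> dot a x} x w" using c1 st by (rule rtrancl_into_rtrancl)
    then show ?case using dw d1 by simp
  qed
  then show ?thesis by simp
qed

definition good :: "zvec \<Rightarrow> zvec set \<Rightarrow> bool" where
  "good a M \<longleftrightarrow> (\<forall>l. 0 < a l) \<and> M \<subseteq> kerA a \<and>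
     (\<forall>x y. nonneg x \<longrightarrow> nonneg y \<longrightarrow> dot a x = dot a y \<longrightarrow> conn M x y) \<and>
     (\<forall>m\<in>M. \<not> conn (M - {m}) (pos_part m) (neg_part m))"

lemma markov_conn2:
  assumes mb: "markov_basis (TYPE('k::field)) a M"
    and "nonneg x" "nonneg y" "dot a x = dot a y"
  shows "conn M x y"
proof -
  let ?z = "x - y"
  have zk: "?z \<in> kerA a" using assms(4) by (simp add: kerA_dot dot_diff)
  have "(binom3 ?z :: 'k poly3) \<in> toric_ideal (TYPE('k)) a"
    unfolding toric_ideal_def using zk by (auto intro: ig_gen)
  then have "(binom3 ?z :: 'k poly3) \<in> ideal_gen (binom3 ` M)"
    using mb unfolding markov_basis_def by simp
  then have c: "conn M (pos_part ?z) (neg_part ?z)" by (rule markov_conn)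
  define mn where "mn = (\<lambda>l. min (x l) (y l))"
  have "nonneg mn" using assms(2,3) unfolding mn_def nonneg_def by simp
  from conn_shift[OF c this]
  have "conn M (pos_part ?z + mn) (neg_part ?z + mn)" .
  moreover have "pos_part ?z + mn = x" "neg_part ?z + mn = y"
    by (rule ext, simp add: pos_part_def neg_part_def mn_def max_def min_def)+
  ultimately show ?thesis by simp
qed

lemma minimal_good:
  assumes pos: "\<forall>i. a i > 0" and mm: "minimal_markov_basis (TYPE('k::field)) a M"
  shows "good a M"
proof -
  have mb: "markov_basis (TYPE('k)) a M" using mm unfolding minimal_markov_basis_def by simp
  have sub: "M \<subseteq> kerA a" using mb unfolding markov_basis_def by simp
  have F2: "\<not> conn (M - {m}) (pos_part m) (neg_part m)" if m: "m \<in> M" for m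
  proof
    assume c: "conn (M - {m}) (pos_part m) (neg_part m)"
    have "(binom3 m :: 'k poly3) \<in> ideal_gen (binom3 ` (M - {m}))"
      using conn_ideal[OF c] unfolding binom3_def by simp
    then have "binom3 ` M \<subseteq> ideal_gen ((binom3 :: zvec \<Rightarrow> 'k poly3) ` (M - {m}))"
      by (auto intro: ig_gen)
    then have "ideal_gen ((binom3 :: zvec \<Rightarrow> 'k poly3) ` M) \<subseteq> ideal_gen (binom3 ` (M - {m}))"
      by (rule ig_sub)
    moreover have "ideal_gen ((binom3 :: zvec \<Rightarrow> 'k poly3) ` (M - {m})) \<subseteq> ideal_gen (binom3 ` M)"
      by (rule ig_mono) auto
    ultimately have "markov_basis (TYPE('k)) a (M - {m})"
      using mb sub unfolding markov_basis_def by auto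
    moreover have "M - {m} \<subset> M" using m by auto
    ultimately show False using mm unfolding minimal_markov_basis_def by blast
  qed
  show ?thesis unfolding good_def
    using pos sub F2 markov_conn2[OF mb] by auto
qed



definition vec3 :: "3 \<Rightarrow> 3 \<Rightarrow> int \<Rightarrow> int \<Rightarrow> int \<Rightarrow> zvec" where
  "vec3 i j x y w = (\<lambda>l. if l = i then x else if l = j then y else w)"

lemma share:
  assumes g: "good a M" and m: "m \<in> M"
    and x: "nonneg x" "dot a x = dot a (pos_part m)"
    and y: "nonneg y" "dot a y = dot a (pos_part m)"
    and l: "0 < x l" "0 < y l"
  shows "conn (M - {m}) x y"
proof -
  have apos: "\<And>l. 0 < a l" and sub: "M \<subseteq> kerA a"
    and F1: "\<And>x y. nonneg x \<Longrightarrow> nonneg y \<Longrightarrow> dot a x = dot a y \<Longrightarrow> conn M x y"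
    using g unfolding good_def by auto
  define e where "e = (\<lambda>i. if i = l then 1 else 0 :: int)"
  have en: "nonneg e" unfolding e_def nonneg_def by simp
  have x': "nonneg (x - e)" using x(1) l(1) unfolding nonneg_def e_def by auto
  have y': "nonneg (y - e)" using y(1) l(2) unfolding nonneg_def e_def by auto
  have "dot a (x - e) = dot a (y - e)" using x(2) y(2) by (simp add: dot_diff)
  then have c: "conn M (x - e) (y - e)" using F1 x' y' by blast
  have de: "dot a e = a l" unfolding dot_def e_def by (simp add: if_distrib cong: if_cong)
  have c2: "conn {u\<in>M. dot a (pos_part u) \<le> dot a (x - e)} (x - e) (y - e)"
    by (rule conn_deg[OF sub _ c]) (simp add: apos less_imp_le)
  have "{u\<in>M. dot a (pos_part u) \<le> dot a (x - e)} \<subseteq> M - {m}"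
    using apos[of l] x(2) de by (auto simp: dot_diff)
  then have "conn (M - {m}) (x - e) (y - e)" using c2 conn_mono by blast
  from conn_shift[OF this en] show ?thesis by simp
qed

lemma F2v:
  assumes g: "good a M" and m: "m \<in> M" and v: "v = m \<or> v = - m"
    and c: "conn (M - {m}) (neg_part v) (pos_part v)"
  shows False
proof -
  have nc: "\<not> conn (M - {m}) (pos_part m) (neg_part m)" using g m unfolding good_def by auto
  have pn: "pos_part (- m) = neg_part m" "neg_part (- m) = pos_part m"
    by (rule ext, simp add: pos_part_def neg_part_def)+
  from v show False
  proof
    assume "v = m" then show False using c nc conn_sym by blast
  next
    assume "v = - m" then show False using c nc pn by simp
  qed
qed

lemma degv:
  assumes g: "good a M" and m: "m \<in> M" and v: "v = m \<or> v = - m"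
  shows "dot a (pos_part v) = dot a (pos_part m)" "dot a (neg_part v) = dot a (pos_part m)"
    "v \<in> kerA a"
proof -
  have mk: "m \<in> kerA a" using g m unfolding good_def by auto
  have pn: "pos_part (- m) = neg_part m" "neg_part (- m) = pos_part m"
    by (rule ext, simp add: pos_part_def neg_part_def)+
  have "dot a (pos_part m) = dot a (neg_part m)" using dot_pos_neg[OF mk] .
  then show "dot a (pos_part v) = dot a (pos_part m)" "dot a (neg_part v) = dot a (pos_part m)"
    using v pn by auto
  show "v \<in> kerA a" using v mk by (auto simp: kerA_dot dot_def sum_negf)
qed

lemma move:
  assumes "u \<in> M" "u \<noteq> m" "u' = u \<or> u' = - u" "nonneg x" "nonneg (x + u')"
  shows "conn (M - {m}) x (x + u')"
proof -
  from assms(3) show ?thesis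
  proof
    assume "u' = u" then show ?thesis using assms by (intro conn_step) auto
  next
    assume "u' = - u" then show ?thesis using assms conn_step'[of u "M - {m}" x] by auto
  qed
qed

locale ijk =
  fixes i j k :: 3
  assumes ij: "i \<noteq> j" and jk: "j \<noteq> k" and ik: "i \<noteq> k"
begin

lemma univ: "(UNIV :: 3 set) = {i, j, k}"
proof -
  have "card {i, j, k} = 3" using ij jk ik by simp
  then show ?thesis by (intro card_subset_eq[symmetric]) auto
qed

lemma cases3: "l = i \<or> l = j \<or> l = k" using univ by auto

lemma sum3: "(\<Sum>l\<in>UNIV. f l) = f i + f j + (f k :: int)"
  unfolding univ using ij jk ik by simp

lemma all3: "(\<forall>l. P l) \<longleftrightarrow> P i \<and> P j \<and> P k"
  using cases3 by metis

lemma dot3: "dot a x = a i * x i + a j * x j + a k * x k"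
  unfolding dot_def sum3 ..

lemma norm3: "norm1 x = \<bar>x i\<bar> + \<bar>x j\<bar> + \<bar>x k\<bar>"
  unfolding norm1_def sum3 ..

lemma nonneg3: "nonneg x \<longleftrightarrow> 0 \<le> x i \<and> 0 \<le> x j \<and> 0 \<le> x k"
  unfolding nonneg_def all3 ..

lemma ker3: "x \<in> kerA a \<longleftrightarrow> a i * x i + a j * x j + a k * x k = 0"
  unfolding kerA_dot dot3 ..

lemma vec_i [simp]: "vec3 i j x y w i = x" unfolding vec3_def by simp
lemma vec_j [simp]: "vec3 i j x y w j = y" unfolding vec3_def using ij by simp
lemma vec_k [simp]: "vec3 i j x y w k = w" unfolding vec3_def using ik jk by simp

lemma ext3: "f i = g i \<Longrightarrow> f j = g j \<Longrightarrow> f k = g k \<Longrightarrow> f = g"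
  using cases3 by (intro ext) metis

end



context ijk
begin

lemma pp3: "pos_part x = vec3 i j (max (x i) 0) (max (x j) 0) (max (x k) 0)"
  by (rule ext3) (simp_all add: pos_part_def)
lemma np3: "neg_part x = vec3 i j (max (- x i) 0) (max (- x j) 0) (max (- x k) 0)"
  by (rule ext3) (simp_all add: neg_part_def)

lemma noA:
  assumes g: "good a M"
  and z: "z \<in> kerA a" "0 < z i" "0 < z j" "z k < 0"
  and m0: "m0 \<in> M" "v = m0 \<or> v = - m0" "z i < v i" "0 \<le> v j" "v k < 0" "z k \<le> v k"
  and w: "w \<in> M" "u = w \<or> u = - w" "0 \<le> u i" "0 \<le> u j" "u k < 0"
  and bad: "u k < z k \<or> z j < u j"
  shows False
proof -
  have apos: "0 < a i" "0 < a j" "0 < a k" using g unfolding good_def by auto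
  have sh: "\<And>m x y l. m \<in> M \<Longrightarrow> nonneg x \<Longrightarrow> nonneg y \<Longrightarrow> dot a x = dot a (pos_part m)
      \<Longrightarrow> dot a y = dot a (pos_part m) \<Longrightarrow> 0 < x l \<Longrightarrow> 0 < y l \<Longrightarrow> conn (M - {m}) x y"
    using share[OF g] by blast
  have vk: "a i * v i + a j * v j + a k * v k = 0" using degv(3)[OF g m0(1,2)] ker3 by blast
  have uk: "a i * u i + a j * u j + a k * u k = 0" using degv(3)[OF g w(1,2)] ker3 by blast
  have zk: "a i * z i + a j * z j + a k * z k = 0" using z(1) ker3 by blast
  have ppu: "pos_part u = vec3 i j (u i) (u j) 0" and npu: "neg_part u = vec3 i j 0 0 (- u k)"
    using w(3,4,5) by (simp_all add: pp3 np3)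
  have ppv: "pos_part v = vec3 i j (v i) (v j) 0" and npv: "neg_part v = vec3 i j 0 0 (- v k)"
    using m0(3,4,5) z(2) by (simp_all add: pp3 np3)
  have Dw: "dot a (pos_part w) = - (a k * u k)"
    using degv(2)[OF g w(1,2)] npu by (simp add: dot3)
  have Dw': "dot a (pos_part u) = - (a k * u k)"
    using degv(1)[OF g w(1,2)] Dw by simp
  have D0: "dot a (pos_part m0) = - (a k * v k)"
    using degv(2)[OF g m0(1,2)] npv by (simp add: dot3)
  have D0': "dot a (pos_part v) = - (a k * v k)"
    using degv(1)[OF g m0(1,2)] D0 by simp
  have nnpu: "nonneg (pos_part u)" "nonneg (neg_part u)" "nonneg (pos_part v)" "nonneg (neg_part v)"
    by simp_all
  have F2w: "conn (M - {w}) (neg_part u) (pos_part u) \<Longrightarrow> False" using F2v[OF g w(1,2)] .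
  have F20: "conn (M - {m0}) (neg_part v) (pos_part v) \<Longrightarrow> False" using F2v[OF g m0(1,2)] .
  have uprod: "a i * 0 = 0" by simp
  show False
  proof (cases "u k < z k")
    case True
    define X where "X = vec3 i j (z i) (z j) (z k - u k)"
    have Xn: "nonneg X" unfolding X_def nonneg3 using z True by simp
    have XD0: "dot a X = - (a k * u k)" unfolding X_def dot3 using zk
      by (simp add: right_diff_distrib; linarith)
    have XD: "dot a X = dot a (pos_part w)" using XD0 Dw by simp
    have c1: "conn (M - {w}) (neg_part u) X"
      by (rule sh[OF w(1) nnpu(2) Xn _ XD, of k]) (use Dw npu True w(5) in \<open>simp_all add: dot3 X_def\<close>)
    have "0 < u i \<or> 0 < u j"
    proof (rule ccontr)
      assume "\<not> (0 < u i \<or> 0 < u j)"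
      then have "u i = 0" "u j = 0" using w(3,4) by auto
      then have "a k * u k = 0" using uk by simp
      then show False using apos w(5) by simp
    qed
    then have c2: "conn (M - {w}) X (pos_part u)"
    proof
      assume h: "0 < u i" show ?thesis
        by (rule sh[OF w(1) Xn nnpu(1) XD Dw'[folded Dw], of i]) (use h z in \<open>simp_all add: X_def ppu\<close>)
    next
      assume h: "0 < u j" show ?thesis
        by (rule sh[OF w(1) Xn nnpu(1) XD Dw'[folded Dw], of j]) (use h z in \<open>simp_all add: X_def ppu\<close>)
    qed
    show False using F2w conn_trans[OF c1 c2] by blast
  next
    case False
    then have uz: "z k \<le> u k" and ujz: "z j < u j" using bad by auto
    have "a j * v j < a j * z j"
    proof -
      have "a i * z i < a i * v i" using m0(3) apos by simp
      moreover have "a k * z k \<le> a k * v k" using m0(6) apos by simp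
      ultimately show ?thesis using vk zk by linarith
    qed
    then have vjz: "v j < z j" using apos(2) by (simp add: mult_less_cancel_left_pos)
    have uneq: "u \<noteq> v" "u \<noteq> - v"
    proof
      assume "u = v" then show False using vjz ujz by simp
    next
      show "u \<noteq> - v"
      proof
        assume "u = - v" then have "u i = - v i" by simp
        then show False using w(3) m0(3) z(2) by simp
      qed
    qed
    have wm: "w \<noteq> m0" using uneq w(2) m0(2) by auto
    have mv: "conn (M - {m0}) (neg_part v) (pos_part u)" if ukv: "u k = v k"
    proof -
      have "neg_part v + u = pos_part u" using ukv by (intro ext3) (simp_all add: npv ppu)
      moreover have "conn (M - {m0}) (neg_part v) (neg_part v + u)"
        by (rule move[OF w(1) wm w(2)]) (simp_all add: ppu[symmetric] \<open>neg_part v + u = pos_part u\<close>)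
      ultimately show ?thesis by simp
    qed
    show False
    proof (cases "0 < u i \<or> 0 < v j")
      case True
      consider "v k < u k" | "u k < v k" | "u k = v k" by linarith
      then show False
      proof cases
        case 1
        define Y where "Y = vec3 i j (u i) (u j) (u k - v k)"
        have Yn: "nonneg Y" unfolding Y_def nonneg3 using w 1 by simp
        have YD0: "dot a Y = - (a k * v k)" unfolding Y_def dot3 using uk
          by (simp add: right_diff_distrib; linarith)
        have YD: "dot a Y = dot a (pos_part m0)" using YD0 D0 by simp
        have c1: "conn (M - {m0}) (neg_part v) Y"
          by (rule sh[OF m0(1) nnpu(4) Yn _ YD, of k]) (use D0 npv 1 m0(5) in \<open>simp_all add: dot3 Y_def\<close>)
        have c2: "conn (M - {m0}) Y (pos_part v)"
          using True
        proof
          assume h: "0 < u i" show ?thesis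
            by (rule sh[OF m0(1) Yn nnpu(3) YD D0'[folded D0], of i]) (use h z m0 in \<open>simp_all add: Y_def ppv\<close>)
        next
          assume h: "0 < v j" show ?thesis
            by (rule sh[OF m0(1) Yn nnpu(3) YD D0'[folded D0], of j]) (use h z ujz in \<open>simp_all add: Y_def ppv\<close>)
        qed
        show False using F20 conn_trans[OF c1 c2] by blast
      next
        case 2
        define Y where "Y = vec3 i j (v i) (v j) (v k - u k)"
        have Yn: "nonneg Y" unfolding Y_def nonneg3 using m0 z 2 by simp
        have YD0: "dot a Y = - (a k * u k)" unfolding Y_def dot3 using vk
          by (simp add: right_diff_distrib; linarith)
        have YD: "dot a Y = dot a (pos_part w)" using YD0 Dw by simp
        have c1: "conn (M - {w}) (neg_part u) Y"
          by (rule sh[OF w(1) nnpu(2) Yn _ YD, of k]) (use Dw npu 2 w(5) in \<open>simp_all add: dot3 Y_def\<close>)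
        have c2: "conn (M - {w}) Y (pos_part u)"
          using True
        proof
          assume h: "0 < u i" show ?thesis
            by (rule sh[OF w(1) Yn nnpu(1) YD Dw'[folded Dw], of i]) (use h z m0 in \<open>simp_all add: Y_def ppu\<close>)
        next
          assume h: "0 < v j" show ?thesis
            by (rule sh[OF w(1) Yn nnpu(1) YD Dw'[folded Dw], of j]) (use h z ujz in \<open>simp_all add: Y_def ppu\<close>)
        qed
        show False using F2w conn_trans[OF c1 c2] by blast
      next
        case 3
        have c1: "conn (M - {m0}) (neg_part v) (pos_part u)" using mv[OF 3] .
        have PD: "dot a (pos_part u) = dot a (pos_part m0)" using Dw' D0 3 by simp
        have c2: "conn (M - {m0}) (pos_part u) (pos_part v)"
          using True
        proof
          assume h: "0 < u i" show ?thesis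
            by (rule sh[OF m0(1) nnpu(1) nnpu(3) PD D0'[folded D0], of i]) (use h z m0 in \<open>simp_all add: ppu ppv\<close>)
        next
          assume h: "0 < v j" show ?thesis
            by (rule sh[OF m0(1) nnpu(1) nnpu(3) PD D0'[folded D0], of j]) (use h z ujz in \<open>simp_all add: ppu ppv\<close>)
        qed
        show False using F20 conn_trans[OF c1 c2] by blast
      qed
    next
      case False
      then have ui0: "u i = 0" and vj0: "v j = 0" using w(3) m0(4) by auto
      define X where "X = vec3 i j (v i - z i) (u j - z j) (v k - z k)"
      have Xn: "nonneg X" unfolding X_def nonneg3 using m0 ujz by simp
      have XD0: "dot a X = - (a k * u k)" unfolding X_def dot3 using vk zk uk ui0 vj0
        by (simp add: right_diff_distrib; linarith)
      have XD: "dot a X = dot a (pos_part w)" using XD0 Dw by simp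
      have c1: "conn (M - {w}) X (pos_part u)"
        by (rule sh[OF w(1) Xn nnpu(1) XD Dw'[folded Dw], of j]) (use ujz z in \<open>simp_all add: X_def ppu\<close>)
      show False
      proof (cases "z k < v k")
        case True
        have c0: "conn (M - {w}) (neg_part u) X"
          by (rule sh[OF w(1) nnpu(2) Xn _ XD, of k]) (use Dw npu True w(5) in \<open>simp_all add: dot3 X_def\<close>)
        show False using F2w conn_trans[OF c0 c1] by blast
      next
        case False
        then have vkz: "v k = z k" using m0(6) by simp
        have pzn: "nonneg (pos_part z)" by simp
        have ppz: "pos_part z = vec3 i j (z i) (z j) 0" using z by (simp add: pp3)
        have PZ0: "dot a (pos_part z) = - (a k * v k)" unfolding ppz dot3
          using zk vkz by simp
        have PZ: "dot a (pos_part z) = dot a (pos_part m0)" using PZ0 D0 by simp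
        have c3: "conn (M - {m0}) (pos_part z) (pos_part v)"
          by (rule sh[OF m0(1) pzn nnpu(3) PZ D0'[folded D0], of i]) (use z m0 in \<open>simp_all add: ppz ppv\<close>)
        show False
        proof (cases "v k < u k")
          case True
          define Y where "Y = vec3 i j 0 (u j) (u k - v k)"
          have Yn: "nonneg Y" unfolding Y_def nonneg3 using w True by simp
          have YD0: "dot a Y = - (a k * v k)" unfolding Y_def dot3 using uk ui0
            by (simp add: right_diff_distrib; linarith)
          have YD: "dot a Y = dot a (pos_part m0)" using YD0 D0 by simp
          have c1: "conn (M - {m0}) (neg_part v) Y"
            by (rule sh[OF m0(1) nnpu(4) Yn _ YD, of k]) (use D0 npv True m0(5) in \<open>simp_all add: dot3 Y_def\<close>)
          have c2: "conn (M - {m0}) Y (pos_part z)"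
            by (rule sh[OF m0(1) Yn pzn YD PZ, of j]) (use z ujz in \<open>simp_all add: Y_def ppz\<close>)
          show False using F20 conn_trans[OF conn_trans[OF c1 c2] c3] by blast
        next
          case False
          then have ukv: "u k = v k" using uz vkz by simp
          have c1: "conn (M - {m0}) (neg_part v) (pos_part u)" using mv[OF ukv] .
          have PD: "dot a (pos_part u) = dot a (pos_part m0)" using Dw' D0 ukv by simp
          have c2: "conn (M - {m0}) (pos_part u) (pos_part z)"
            by (rule sh[OF m0(1) nnpu(1) pzn PD PZ, of j]) (use z ujz in \<open>simp_all add: ppu ppz\<close>)
          show False using F20 conn_trans[OF conn_trans[OF c1 c2] c3] by blast
        qed
      qed
    qed
  qed
qed

end



lemma rd_iff: "reduces_distance u z \<longleftrightarrow> (\<exists>e\<in>{1,-1::int}.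
   ((\<forall>l. 0 \<le> pos_part z l + e * u l) \<and> norm1 (\<lambda>l. pos_part z l + e * u l - neg_part z l) < norm1 z) \<or>
   ((\<forall>l. 0 \<le> neg_part z l + e * u l) \<and> norm1 (\<lambda>l. neg_part z l + e * u l - pos_part z l) < norm1 z))"
  unfolding reduces_distance_def by blast

lemma rdI1: "e \<in> {1,-1} \<Longrightarrow> (\<forall>l. 0 \<le> pos_part z l + e * u l) \<Longrightarrow>
   norm1 (\<lambda>l. pos_part z l + e * u l - neg_part z l) < norm1 z \<Longrightarrow> reduces_distance u z"
  unfolding rd_iff by blast
lemma rdI2: "e \<in> {1,-1} \<Longrightarrow> (\<forall>l. 0 \<le> neg_part z l + e * u l) \<Longrightarrow>
   norm1 (\<lambda>l. neg_part z l + e * u l - pos_part z l) < norm1 z \<Longrightarrow> reduces_distance u z"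
  unfolding rd_iff by blast

context ijk
begin

lemma core:
  assumes g: "good a M"
  and z: "z \<in> kerA a" "0 < z i" "0 < z j" "z k < 0"
  and m0: "m0 \<in> M" "v = m0 \<or> v = - m0" "z i < v i" "0 \<le> v j" "v k < 0" "z k \<le> v k"
  and c: "c \<in> kerA a" "c i = 0" "z j < c j" "c k < 0"
  and u: "u \<in> M" "reduces_distance u c"
  shows "reduces_distance u z"
proof -
  have apos: "0 < a i" "0 < a j" "0 < a k" using g unfolding good_def by auto
  have sh: "\<And>m x y l. m \<in> M \<Longrightarrow> nonneg x \<Longrightarrow> nonneg y \<Longrightarrow> dot a x = dot a (pos_part m)
      \<Longrightarrow> dot a y = dot a (pos_part m) \<Longrightarrow> 0 < x l \<Longrightarrow> 0 < y l \<Longrightarrow> conn (M - {m}) x y"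
    using share[OF g] by blast
  have vk: "a i * v i + a j * v j + a k * v k = 0" using degv(3)[OF g m0(1,2)] ker3 by blast
  have zk: "a i * z i + a j * z j + a k * z k = 0" using z(1) ker3 by blast
  have ppc: "pos_part c = vec3 i j 0 (c j) 0" and npc: "neg_part c = vec3 i j 0 0 (- c k)"
    using c z by (simp_all add: pp3 np3)
  have ppz: "pos_part z = vec3 i j (z i) (z j) 0" and npz: "neg_part z = vec3 i j 0 0 (- z k)"
    using z by (simp_all add: pp3 np3)
  have cjp: "0 < c j" using c z by simp
  have nc: "norm1 c = c j - c k" using c z by (simp add: norm3)
  have nz: "norm1 z = z i + z j - z k" using z by (simp add: norm3)
  from u(2) obtain e where e: "e \<in> {1, -1::int}" and
    alt: "((\<forall>l. 0 \<le> pos_part c l + e * u l) \<and> norm1 (\<lambda>l. pos_part c l + e * u l - neg_part c l) < norm1 c) \<or>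
   ((\<forall>l. 0 \<le> neg_part c l + e * u l) \<and> norm1 (\<lambda>l. neg_part c l + e * u l - pos_part c l) < norm1 c)"
    unfolding rd_iff by blast
  define u' where "u' = (\<lambda>l. e * u l)"
  have u'pm: "u' = u \<or> u' = - u" using e unfolding u'_def by auto
  have uk: "a i * u' i + a j * u' j + a k * u' k = 0" using degv(3)[OF g u(1) u'pm] ker3 by blast
  have zero3: "u' i = 0 \<and> u' j = 0 \<and> u' k = 0" if "0 \<le> u' i" "0 \<le> u' j" "0 \<le> u' k"
  proof -
    have "0 \<le> a i * u' i" "0 \<le> a j * u' j" "0 \<le> a k * u' k" using that apos by simp_all
    then have "a i * u' i = 0" "a j * u' j = 0" "a k * u' k = 0" using uk by linarith+
    then show ?thesis using apos by simp
  qed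
  from alt show ?thesis
  proof
    assume A: "(\<forall>l. 0 \<le> pos_part c l + e * u l) \<and> norm1 (\<lambda>l. pos_part c l + e * u l - neg_part c l) < norm1 c"
    have n1: "0 \<le> u' i" "0 \<le> c j + u' j" "0 \<le> u' k"
      using A unfolding all3 u'_def by (simp_all add: ppc)
    have n2: "\<bar>u' i\<bar> + \<bar>c j + u' j\<bar> + \<bar>u' k + c k\<bar> < c j - c k"
      using A c cjp unfolding u'_def by (simp add: norm3 ppc npc)
    have uj: "u' j < 0"
    proof (rule ccontr)
      assume "\<not> u' j < 0"
      then have "u' i = 0 \<and> u' j = 0 \<and> u' k = 0" using zero3 n1 by simp
      then show False using n2 c by simp
    qed
    show ?thesis
    proof (cases "- u' j \<le> z j")
      case True
      show ?thesis
      proof (cases "- z k < u' k")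
        case True
        have "a k * (- z k) < a k * u' k" using True apos by (intro mult_strict_left_mono) simp_all
        moreover have "a j * (- u' j) \<le> a j * z j" using \<open>- u' j \<le> z j\<close> apos by (intro mult_left_mono) simp_all
        moreover have "0 \<le> a i * u' i" "0 < a i * z i" using n1 z apos by simp_all
        ultimately show ?thesis using uk zk by linarith
      next
        case False
        show ?thesis
        proof (rule rdI1[OF e])
          show "\<forall>l. 0 \<le> pos_part z l + e * u l"
            unfolding all3 using n1 True z unfolding u'_def by (simp add: ppz)
          have "\<bar>c j + u' j\<bar> = c j + u' j" using n1 by simp
          moreover have "\<bar>u' i\<bar> = u' i" using n1 by simp
          ultimately have n3: "u' i + u' j + \<bar>u' k + c k\<bar> < - c k" using n2 by linarith
          have "u' i + u' j - u' k < 0"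
          proof (cases "u' k + c k \<le> 0")
            case True then show ?thesis using n3 by simp
          next
            case False then show ?thesis using n3 by simp
          qed
          then show "norm1 (\<lambda>l. pos_part z l + e * u l - neg_part z l) < norm1 z"
            unfolding norm3 nz using n1 True False z unfolding u'_def by (simp add: ppz npz)
        qed
      qed
    next
      case False
      show ?thesis
      proof (cases "0 < u' i")
        case True
        define X where "X = vec3 i j (v i - z i) (- u' j - z j + v j) (v k - z k)"
        have Xn: "nonneg X" unfolding X_def nonneg3 using m0 False by simp
        have ppu: "pos_part u' = vec3 i j (u' i) 0 (u' k)" and npu: "neg_part u' = vec3 i j 0 (- u' j) 0"
          using n1 uj by (simp_all add: pp3 np3)
        have Du: "dot a (pos_part u) = - (a j * u' j)"
          using degv(2)[OF g u(1) u'pm] npu by (simp add: dot3)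
        have Du': "dot a (pos_part u') = dot a (pos_part u)"
          using degv(1)[OF g u(1) u'pm] by simp
        have Dn: "dot a (neg_part u') = dot a (pos_part u)"
          using degv(2)[OF g u(1) u'pm] by simp
        have XD0: "dot a X = - (a j * u' j)" unfolding X_def dot3 using vk zk
          by (simp add: right_diff_distrib distrib_left; linarith)
        have XD: "dot a X = dot a (pos_part u)" using XD0 Du by simp
        have c1: "conn (M - {u}) (neg_part u') X"
          by (rule sh[OF u(1) _ Xn Dn XD, of j]) (use False m0 uj in \<open>simp_all add: X_def npu nonneg3\<close>)
        have c2: "conn (M - {u}) X (pos_part u')"
          by (rule sh[OF u(1) Xn _ XD Du', of i]) (use True m0 n1 in \<open>simp_all add: X_def ppu nonneg3\<close>)
        show ?thesis using F2v[OF g u(1) u'pm] conn_trans[OF c1 c2] by blast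
      next
        case False
        then have ui0: "u' i = 0" using n1 by simp
        have ukp: "0 < u' k"
        proof (rule ccontr)
          assume "\<not> 0 < u' k"
          then have "u' k = 0" using n1 by simp
          then have "a j * u' j = 0" using uk ui0 by simp
          then show False using apos uj by simp
        qed
        have mpm: "- u' = u \<or> - u' = - u" using u'pm by auto
        have False
          by (rule noA[OF g z m0 u(1) mpm]) (use ui0 uj ukp \<open>\<not> - u' j \<le> z j\<close> in simp_all)
        then show ?thesis ..
      qed
    qed
  next
    assume B: "(\<forall>l. 0 \<le> neg_part c l + e * u l) \<and> norm1 (\<lambda>l. neg_part c l + e * u l - pos_part c l) < norm1 c"
    have n1: "0 \<le> u' i" "0 \<le> u' j" "0 \<le> - c k + u' k"
      using B unfolding all3 u'_def by (simp_all add: npc)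
    have n2: "\<bar>u' i\<bar> + \<bar>u' j - c j\<bar> + \<bar>- c k + u' k\<bar> < c j - c k"
      using B c cjp unfolding u'_def by (simp add: norm3 ppc npc)
    have uk0: "u' k < 0"
    proof (rule ccontr)
      assume "\<not> u' k < 0"
      then have "u' i = 0 \<and> u' j = 0 \<and> u' k = 0" using zero3 n1 by simp
      then show False using n2 c by simp
    qed
    have h1: "z k \<le> u' k" and h2: "u' j \<le> z j"
      using noA[OF g z m0 u(1) u'pm n1(1,2) uk0] by force+
    show ?thesis
    proof (rule rdI2[OF e])
      show "\<forall>l. 0 \<le> neg_part z l + e * u l"
        unfolding all3 using n1 h1 unfolding u'_def by (simp add: npz)
      have a1: "\<bar>u' j - c j\<bar> = c j - u' j" using h2 c by simp
      have a2: "\<bar>- c k + u' k\<bar> = - c k + u' k" using n1 by simp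
      have a3: "\<bar>u' j - z j\<bar> = z j - u' j" using h2 by simp
      have a4: "\<bar>- z k + u' k\<bar> = - z k + u' k" using h1 by simp
      have a5: "\<bar>u' i\<bar> = u' i" using n1 by simp
      have key: "\<bar>u' i - z i\<bar> + \<bar>u' j - z j\<bar> + \<bar>- z k + u' k\<bar> < z i + z j - z k"
      proof (cases "u' i \<le> z i")
        case True
        then have "\<bar>u' i - z i\<bar> = z i - u' i" by simp
        then show ?thesis using a3 a4 uk0 n1 by linarith
      next
        case False
        then have "\<bar>u' i - z i\<bar> = u' i - z i" by simp
        then show ?thesis using a1 a2 a3 a4 a5 n2 z by linarith
      qed
      show "norm1 (\<lambda>l. neg_part z l + e * u l - pos_part z l) < norm1 z"
        unfolding norm3 nz using key unfolding u'_def by (simp add: ppz npz)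
    qed
  qed
qed

end



lemma rd_neg: "reduces_distance u (- z) \<longleftrightarrow> reduces_distance u z"
proof -
  have "pos_part (- z) = neg_part z" "neg_part (- z) = pos_part z"
    by (rule ext, simp add: pos_part_def neg_part_def)+
  moreover have "norm1 (- z) = norm1 z" unfolding norm1_def by simp
  ultimately show ?thesis unfolding rd_iff by auto
qed

lemma conformal:
  assumes conf: "\<forall>l. c l = 0 \<or> (0 < c l \<and> c l \<le> z l) \<or> (z l \<le> c l \<and> c l < 0)"
    and r: "reduces_distance u c"
  shows "reduces_distance u z"
proof -
  have pc: "pos_part c l \<le> pos_part z l" "neg_part c l \<le> neg_part z l" for l
    using conf[rule_format, of l] unfolding pos_part_def neg_part_def by auto
  have nz: "norm1 z = norm1 c + norm1 (z - c)"
  proof -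
    have "\<bar>z l\<bar> = \<bar>c l\<bar> + \<bar>z l - c l\<bar>" for l using conf[rule_format, of l] by auto
    then show ?thesis unfolding norm1_def by (simp add: sum.distrib)
  qed
  have tri: "norm1 (\<lambda>l. z l + e * u l) \<le> norm1 (\<lambda>l. c l + e * u l) + norm1 (z - c)" for e
  proof -
    have "\<bar>z l + e * u l\<bar> \<le> \<bar>c l + e * u l\<bar> + \<bar>z l - c l\<bar>" for l by linarith
    then show ?thesis unfolding norm1_def by (simp add: sum.distrib[symmetric] sum_mono)
  qed
  have pm: "pos_part x l - neg_part x l = x l" for x l by (simp add: pos_part_def neg_part_def)
  from r obtain e where e: "e \<in> {1, -1::int}" and
    alt: "((\<forall>l. 0 \<le> pos_part c l + e * u l) \<and> norm1 (\<lambda>l. pos_part c l + e * u l - neg_part c l) < norm1 c) \<or>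
   ((\<forall>l. 0 \<le> neg_part c l + e * u l) \<and> norm1 (\<lambda>l. neg_part c l + e * u l - pos_part c l) < norm1 c)"
    unfolding rd_iff by blast
  from alt show ?thesis
  proof
    assume A: "(\<forall>l. 0 \<le> pos_part c l + e * u l) \<and> norm1 (\<lambda>l. pos_part c l + e * u l - neg_part c l) < norm1 c"
    have eq: "(\<lambda>l. pos_part x l + e * u l - neg_part x l) = (\<lambda>l. x l + e * u l)" for x
      using pm by (simp add: algebra_simps)
    show ?thesis
    proof (rule rdI1[OF e])
      show "\<forall>l. 0 \<le> pos_part z l + e * u l" using A pc(1) by (meson add_right_mono order_trans)
      show "norm1 (\<lambda>l. pos_part z l + e * u l - neg_part z l) < norm1 z"
        using A tri[of e] nz unfolding eq by linarith
    qed
  next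
    assume B: "(\<forall>l. 0 \<le> neg_part c l + e * u l) \<and> norm1 (\<lambda>l. neg_part c l + e * u l - pos_part c l) < norm1 c"
    have eq: "(\<lambda>l. neg_part x l + e * u l - pos_part x l) = (\<lambda>l. - (x l + (- e) * u l))" for x
      using pm by (simp add: algebra_simps)
    have nn: "norm1 (\<lambda>l. - f l) = norm1 f" for f unfolding norm1_def by simp
    show ?thesis
    proof (rule rdI2[OF e])
      show "\<forall>l. 0 \<le> neg_part z l + e * u l" using B pc(2) by (meson add_right_mono order_trans)
      show "norm1 (\<lambda>l. neg_part z l + e * u l - pos_part z l) < norm1 z"
        using B tri[of "- e"] nz unfolding eq nn by linarith
    qed
  qed
qed

context ijk
begin

lemma main_case:
  assumes g: "good a M" and hc: "reduces_distance_of M (circuits a)"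
    and z: "z \<in> kerA a" "0 < z i" "0 < z j" "z k < 0"
  shows "\<exists>u\<in>M. reduces_distance u z"
proof -
  have apos: "0 < a i" "0 < a j" "0 < a k" using g unfolding good_def by auto
  have zk: "a i * z i + a j * z j + a k * z k = 0" using z(1) ker3 by blast
  define c where "c = vec3 i j 0 (a k) (- a j)"
  define c' where "c' = vec3 i j (a k) 0 (- a i)"
  have cc: "c \<in> circuits a"
  proof -
    have "{l. c l \<noteq> 0} = {j, k}"
    proof (rule set_eqI)
      fix l show "l \<in> {l. c l \<noteq> 0} \<longleftrightarrow> l \<in> {j, k}"
        using cases3[of l] apos ij jk ik unfolding c_def by auto
    qed
    moreover have "c \<noteq> (\<lambda>_. 0)"
    proof
      assume "c = (\<lambda>_. 0)" then have "c j = 0" by simp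
      then show False using apos unfolding c_def by simp
    qed
    moreover have "c \<in> kerA a" unfolding ker3 c_def by simp
    ultimately show ?thesis unfolding circuits_def using jk by simp
  qed
  have cc': "c' \<in> circuits a"
  proof -
    have "{l. c' l \<noteq> 0} = {i, k}"
    proof (rule set_eqI)
      fix l show "l \<in> {l. c' l \<noteq> 0} \<longleftrightarrow> l \<in> {i, k}"
        using cases3[of l] apos ij jk ik unfolding c'_def by auto
    qed
    moreover have "c' \<noteq> (\<lambda>_. 0)"
    proof
      assume "c' = (\<lambda>_. 0)" then have "c' i = 0" by simp
      then show False using apos unfolding c'_def by simp
    qed
    moreover have "c' \<in> kerA a" unfolding ker3 c'_def by simp
    ultimately show ?thesis unfolding circuits_def using ik by simp
  qed
  obtain uc where uc: "uc \<in> M" "reduces_distance uc c"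
    using hc cc unfolding reduces_distance_of_def circuits_def by blast
  obtain uc' where uc': "uc' \<in> M" "reduces_distance uc' c'"
    using hc cc' unfolding reduces_distance_of_def circuits_def by blast
  show ?thesis
  proof (cases "a k \<le> z j")
    case True
    have h1: "a j * a k \<le> a j * z j" using True apos by (intro mult_left_mono) simp_all
    have h2: "0 < a i * z i" "0 < a j * z j" using apos z by simp_all
    have h3: "a k * (- z k) = a i * z i + a j * z j" using zk by simp
    have h4: "a k * a j = a j * a k" by (rule mult.commute)
    have "a k * a j < a k * (- z k)" using h1 h2 h3 h4 by linarith
    then have "a j < - z k" using mult_less_cancel_left_pos[OF apos(3), of "a j" "- z k"] by blast
    then have "\<forall>l. c l = 0 \<or> (0 < c l \<and> c l \<le> z l) \<or> (z l \<le> c l \<and> c l < 0)"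
      unfolding all3 c_def using True apos by simp
    then show ?thesis using conformal uc by blast
  next
    case False
    then have zjc: "z j < a k" by simp
    show ?thesis
    proof (cases "a k \<le> z i")
      case True
      have h1: "a i * a k \<le> a i * z i" using True apos by (intro mult_left_mono) simp_all
      have h2: "0 < a i * z i" "0 < a j * z j" using apos z by simp_all
      have h3: "a k * (- z k) = a i * z i + a j * z j" using zk by simp
      have h4: "a k * a i = a i * a k" by (rule mult.commute)
      have "a k * a i < a k * (- z k)" using h1 h2 h3 h4 by linarith
      then have "a i < - z k" using mult_less_cancel_left_pos[OF apos(3), of "a i" "- z k"] by blast
      then have "\<forall>l. c' l = 0 \<or> (0 < c' l \<and> c' l \<le> z l) \<or> (z l \<le> c' l \<and> c' l < 0)"
        unfolding all3 c'_def using True apos by simp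
      then show ?thesis using conformal uc' by blast
    next
      case False
      then have zic: "z i < a k" by simp
      have F1: "\<And>x y. nonneg x \<Longrightarrow> nonneg y \<Longrightarrow> dot a x = dot a y \<Longrightarrow> conn M x y"
        using g unfolding good_def by auto
      have M0: "0 \<notin> M"
      proof
        assume "0 \<in> M"
        then have "\<not> conn (M - {0}) (pos_part 0) (neg_part 0)" using g unfolding good_def by blast
        moreover have "pos_part 0 = neg_part (0::zvec)" by (rule ext) (simp add: pos_part_def neg_part_def)
        ultimately show False by simp
      qed
      have "dot a (neg_part z) = dot a (pos_part z)" using dot_pos_neg[OF z(1)] by simp
      then have cQP: "conn M (neg_part z) (pos_part z)" using F1 by simp
      have QP: "neg_part z \<noteq> pos_part z"
      proof
        assume "neg_part z = pos_part z"
        then have "neg_part z i = pos_part z i" by simp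
        then show False using z(2) by (simp add: pos_part_def neg_part_def)
      qed
      obtain y where st: "(neg_part z, y) \<in> stepr M"
        using cQP QP by (metis converse_rtranclE)
      then obtain m0 where m0: "m0 \<in> M" "nonneg y" "y = neg_part z + m0 \<or> y = neg_part z - m0"
        unfolding stepr_def by auto
      define v where "v = y - neg_part z"
      have vpm: "v = m0 \<or> v = - m0" using m0(3) unfolding v_def by auto
      have npz: "neg_part z = vec3 i j 0 0 (- z k)" using z by (simp add: np3)
      have ppz: "pos_part z = vec3 i j (z i) (z j) 0" using z by (simp add: pp3)
      have yv: "y = neg_part z + v" unfolding v_def by simp
      have vn: "0 \<le> v i" "0 \<le> v j" "z k \<le> v k"
        using m0(2) unfolding yv nonneg3 by (simp_all add: npz)
      have vk: "a i * v i + a j * v j + a k * v k = 0" using degv(3)[OF g m0(1) vpm] ker3 by blast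
      have v0: "v \<noteq> 0" using vpm m0(1) M0 by auto
      have vkn: "v k < 0"
      proof (rule ccontr)
        assume "\<not> v k < 0"
        then have "0 \<le> a i * v i" "0 \<le> a j * v j" "0 \<le> a k * v k" using vn apos by simp_all
        then have "a i * v i = 0" "a j * v j = 0" "a k * v k = 0" using vk by linarith+
        then have "v i = 0" "v j = 0" "v k = 0" using apos by simp_all
        then have "v = 0" by (intro ext3) simp_all
        then show False using v0 by simp
      qed
      show ?thesis
      proof (cases "z i < v i")
        case True
        have "reduces_distance uc z"
          by (rule core[OF g z m0(1) vpm True vn(2) vkn vn(3) _ _ _ _ uc])
             (use apos zjc in \<open>simp_all add: c_def ker3\<close>)
        then show ?thesis using uc by blast
      next
        case False
        show ?thesis
        proof (cases "z j < v j")
          case True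
          interpret jik: ijk j i k using ij jk ik by unfold_locales auto
          have z': "0 < z j" "0 < z i" "z k < 0" using z by auto
          have "reduces_distance uc' z"
            by (rule jik.core[OF g z(1) z' m0(1) vpm True vn(1) vkn vn(3) _ _ _ _ uc'])
               (use apos zic in \<open>simp_all add: c'_def ker3 jik.ker3\<close>)
          then show ?thesis using uc' by blast
        next
          case False
          have vi: "v i \<le> z i" and vj: "v j \<le> z j" using False \<open>\<not> z i < v i\<close> by simp_all
          obtain e where e: "e \<in> {1, -1::int}" "v = (\<lambda>l. e * m0 l)" using vpm by fastforce
          have "reduces_distance m0 z"
          proof (rule rdI2[OF e(1)])
            show "\<forall>l. 0 \<le> neg_part z l + e * m0 l" using m0(2) unfolding yv e(2) nonneg_def by simp
            show "norm1 (\<lambda>l. neg_part z l + e * m0 l - pos_part z l) < norm1 z"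
            proof -
              have vc: "e * m0 l = v l" for l using e(2) by simp
              have "norm1 (\<lambda>l. neg_part z l + e * m0 l - pos_part z l)
                  = \<bar>v i - z i\<bar> + \<bar>v j - z j\<bar> + \<bar>- z k + v k\<bar>"
                by (simp add: norm3 npz ppz vc)
              also have "\<dots> = (z i - v i) + (z j - v j) + (- z k + v k)"
                using vi vj vn by simp
              finally show ?thesis using vn vkn z by (simp add: norm3)
            qed
          qed
          then show ?thesis using m0(1) by blast
        qed
      qed
    qed
  qed
qed

end



context ijk
begin

lemma circ2:
  assumes hc: "reduces_distance_of M (circuits a)" and z: "z \<in> kerA a" "z \<noteq> (\<lambda>_. 0)"
    and s: "{l. z l \<noteq> 0} = {x, y}" "x \<noteq> y"
  shows "\<exists>u\<in>M. reduces_distance u z"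
proof -
  have "z \<in> circuits a" unfolding circuits_def using z s by simp
  then show ?thesis using hc z unfolding reduces_distance_of_def circuits_def by blast
qed

lemma main_all:
  assumes g: "good a M" and hc: "reduces_distance_of M (circuits a)"
    and z: "z \<in> kerA a" "z \<noteq> (\<lambda>_. 0)"
  shows "\<exists>u\<in>M. reduces_distance u z"
proof -
  have apos: "0 < a i" "0 < a j" "0 < a k" using g unfolding good_def by auto
  have zk: "a i * z i + a j * z j + a k * z k = 0" using z(1) ker3 by blast
  have nk: "- z \<in> kerA a" using zk unfolding ker3 by simp
  interpret ikj: ijk i k j using ij jk ik by unfold_locales auto
  interpret jki: ijk j k i using ij jk ik by unfold_locales auto
  have negI: "\<exists>u\<in>M. reduces_distance u (- z) \<Longrightarrow> \<exists>u\<in>M. reduces_distance u z"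
    using rd_neg by blast
  have nz: "\<not> (z i = 0 \<and> z j = 0 \<and> z k = 0)"
  proof
    assume "z i = 0 \<and> z j = 0 \<and> z k = 0"
    then have "z = (\<lambda>_. 0)" by (intro ext3) simp_all
    then show False using z(2) by simp
  qed
  show ?thesis
  proof (cases "z i = 0 \<or> z j = 0 \<or> z k = 0")
    case True
    show ?thesis
    proof (cases "z i = 0")
      case zi: True
      have "z j \<noteq> 0 \<and> z k \<noteq> 0" using zk zi nz apos by auto
      note nzf = this
        have "{l. z l \<noteq> 0} = {j, k}"
        proof (rule set_eqI)
          fix l show "l \<in> {l. z l \<noteq> 0} \<longleftrightarrow> l \<in> {j, k}"
            using cases3[of l] nzf zi by auto
        qed
      then show ?thesis using circ2[OF hc z] jk by blast
    next
      case zi: False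
      show ?thesis
      proof (cases "z j = 0")
        case zj: True
        have "z k \<noteq> 0" using zk zj zi apos by auto
        note nzf = this
        have "{l. z l \<noteq> 0} = {i, k}"
        proof (rule set_eqI)
          fix l show "l \<in> {l. z l \<noteq> 0} \<longleftrightarrow> l \<in> {i, k}"
            using cases3[of l] nzf zi zj by auto
        qed
        then show ?thesis using circ2[OF hc z] ik by blast
      next
        case zj: False
        have "z k = 0" using True zi zj by simp
        note nzf = this
        have "{l. z l \<noteq> 0} = {i, j}"
        proof (rule set_eqI)
          fix l show "l \<in> {l. z l \<noteq> 0} \<longleftrightarrow> l \<in> {i, j}"
            using cases3[of l] nzf zi zj by auto
        qed
        then show ?thesis using circ2[OF hc z] ij by blast
      qed
    qed
  next
    case False
    then have nzs: "z i \<noteq> 0" "z j \<noteq> 0" "z k \<noteq> 0" by auto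
    have pp: "0 < a i * z i" if "0 < z i" using that apos by simp
    have pp2: "0 < a j * z j" if "0 < z j" using that apos by simp
    have pp3': "0 < a k * z k" if "0 < z k" using that apos by simp
    have nn: "a i * z i < 0" if "z i < 0" using that apos by (simp add: mult_pos_neg)
    have nn2: "a j * z j < 0" if "z j < 0" using that apos by (simp add: mult_pos_neg)
    have nn3: "a k * z k < 0" if "z k < 0" using that apos by (simp add: mult_pos_neg)
    show ?thesis
    proof (cases "z k < 0")
      case zkn: True
      show ?thesis
      proof (cases "0 < z i")
        case zip: True
        show ?thesis
        proof (cases "0 < z j")
          case True then show ?thesis using main_case[OF g hc z(1) zip True zkn] by blast
        next
          case False then have "z j < 0" using nzs by simp
          then show ?thesis using jki.main_case[OF g hc nk] zip zkn negI by simp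
        qed
      next
        case zin: False then have zin: "z i < 0" using nzs by simp
        show ?thesis
        proof (cases "0 < z j")
          case True then show ?thesis using ikj.main_case[OF g hc nk] zin zkn negI by simp
        next
          case False then have "z j < 0" using nzs by simp
          then show ?thesis using zin zkn zk nn nn2 nn3 by linarith
        qed
      qed
    next
      case False then have zkp: "0 < z k" using nzs by simp
      show ?thesis
      proof (cases "0 < z i")
        case zip: True
        show ?thesis
        proof (cases "0 < z j")
          case True then show ?thesis using zip zkp zk pp pp2 pp3' by linarith
        next
          case False then have "z j < 0" using nzs by simp
          then show ?thesis using ikj.main_case[OF g hc z(1)] zip zkp by simp
        qed
      next
        case zin: False then have zin: "z i < 0" using nzs by simp
        show ?thesis
        proof (cases "0 < z j")
          case True then show ?thesis using jki.main_case[OF g hc z(1)] zin zkp by simp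
        next
          case False then have "z j < 0" using nzs by simp
          then show ?thesis using main_case[OF g hc nk] zin zkp negI by simp
        qed
      qed
    qed
  qed
qed

end

theorem theorem3p1:
  fixes a :: zvec and M :: "zvec set"
  assumes pos: "\<forall>i. a i > 0"
    and distinct: "inj a"
    and minimal: "minimal_markov_basis (TYPE('k::field)) a M"
  shows "distance_reducing a M \<longleftrightarrow> reduces_distance_of M (circuits a)"
proof
  assume "distance_reducing a M"
  then show "reduces_distance_of M (circuits a)"
    unfolding distance_reducing_def reduces_distance_of_def circuits_def by auto
next
  assume hc: "reduces_distance_of M (circuits a)"
  have g: "good a M" by (rule minimal_good[OF pos minimal])
  interpret ijk "0::3" 1 2 by unfold_locales simp_all
  show "distance_reducing a M"
    unfolding distance_reducing_def reduces_distance_of_def using main_all[OF g hc] by blast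
qed



end
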